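(* Let $\mathcal{H}$ be a complex Hilbert space and let $T\in\mathbb{B}(\mathcal{H})$ have Cartesian decomposition $T=T_1+iT_2$, where $T_1=\frac{T+T^*}{2}$ and $T_2=\frac{T-T^*}{2i}$. Then \[ \|T\|^2+\max\big(\alpha(T),\alpha(T^* )\big)\le 2\,\omega^2(T)+D(T). \]
   Context: $\mathbb{B}(\mathcal{H})$ denotes the algebra of bounded linear operators on the complex Hilbert space $\mathcal{H}$. For $T\in\mathbb{B}(\mathcal{H})$: the numerical radius is $\omega(T)=\sup\{|\langle Tx,x\rangle| : x\in\mathcal{H},\ \|x\|=1\}$; $\|T\|$ is the operator norm; $\alpha(T)=\inf_{\|x\|=1}\|Tx\|^2$; and, with $T_1=\frac{T+T^*}{2}$, $T_2=\frac{T-T^*}{2i}$, $D(T)=2\min(\|T_1\|^2,\|T_2\|^2)=\min\left(\frac{\|T-T^*\|^2}{2},\frac{\|T+T^*\|^2}{2}\right)$. *)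

theory Defs
  imports "HOL-Analysis.Analysis"
begin

text \<open>The library has no complex inner product spaces, so we introduce a type class of
  complex Hilbert spaces: a (real) Banach space carrying a complex scalar multiplication
  that extends the real one, and a complex inner product (linear in the first argument,
  conjugate-symmetric) inducing the norm.\<close>

class complex_hilbert = banach +
  fixes scaleC :: "complex \<Rightarrow> 'a \<Rightarrow> 'a" (infixr \<open>*\<^sub>C\<close> 75)
    and cinner :: "'a \<Rightarrow> 'a \<Rightarrow> complex"
  assumes scaleC_add_right: "a *\<^sub>C (x + y) = a *\<^sub>C x + a *\<^sub>C y"
    and scaleC_add_left: "(a + b) *\<^sub>C x = a *\<^sub>C x + b *\<^sub>C x"
    and scaleC_scaleC: "a *\<^sub>C (b *\<^sub>C x) = (a * b) *\<^sub>C x"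
    and scaleC_one: "1 *\<^sub>C x = x"
    and scaleC_of_real: "complex_of_real r *\<^sub>C x = r *\<^sub>R x"
    and cinner_commute: "cinner x y = cnj (cinner y x)"
    and cinner_add_left: "cinner (x + y) z = cinner x z + cinner y z"
    and cinner_scaleC_left: "cinner (a *\<^sub>C x) y = a * cinner x y"
    and cinner_self_norm: "cinner x x = complex_of_real ((norm x)\<^sup>2)"

definition bounded_clinear_op :: "('a::complex_hilbert \<Rightarrow> 'a) \<Rightarrow> bool" where
  "bounded_clinear_op T \<longleftrightarrow>
     (\<forall>x y. T (x + y) = T x + T y) \<and> (\<forall>c x. T (c *\<^sub>C x) = c *\<^sub>C T x) \<and>
     (\<exists>K. \<forall>x. norm (T x) \<le> norm x * K)"

definition cadjoint :: "('a::complex_hilbert \<Rightarrow> 'a) \<Rightarrow> ('a \<Rightarrow> 'a)" where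
  "cadjoint T = (SOME S. \<forall>x y. cinner (T x) y = cinner x (S y))"

definition numrad :: "('a::complex_hilbert \<Rightarrow> 'a) \<Rightarrow> real" where
  "numrad T = Sup {cmod (cinner (T x) x) | x. norm x = 1}"

definition alpha_op :: "('a::complex_hilbert \<Rightarrow> 'a) \<Rightarrow> real" where
  "alpha_op T = Inf {(norm (T x))\<^sup>2 | x. norm x = 1}"

definition re_part :: "('a::complex_hilbert \<Rightarrow> 'a) \<Rightarrow> ('a \<Rightarrow> 'a)" where
  "re_part T = (\<lambda>x. (1/2) *\<^sub>C (T x + cadjoint T x))"

definition im_part :: "('a::complex_hilbert \<Rightarrow> 'a) \<Rightarrow> ('a \<Rightarrow> 'a)" where
  "im_part T = (\<lambda>x. (1 / (2 * \<i>)) *\<^sub>C (T x - cadjoint T x))"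

definition D_op :: "('a::complex_hilbert \<Rightarrow> 'a) \<Rightarrow> real" where
  "D_op T = 2 * min ((onorm (re_part T))\<^sup>2) ((onorm (im_part T))\<^sup>2)"

end

theory Submission
  imports Defs
begin


lemma scaleC_zero_left[simp]: "(0::complex) *\<^sub>C (x::'a::complex_hilbert) = 0"
  using scaleC_of_real[of 0 x] by simp

lemma scaleC_zero_right[simp]: "a *\<^sub>C (0::'a::complex_hilbert) = 0"
proof -
  have "a *\<^sub>C (0::'a) = a *\<^sub>C (0 + 0)" by simp
  also have "\<dots> = a *\<^sub>C 0 + a *\<^sub>C 0" by (rule scaleC_add_right)
  finally show ?thesis by simp
qed

lemma scaleC_minus1: "(-1) *\<^sub>C (x::'a::complex_hilbert) = - x"
  using scaleC_of_real[of "-1" x] by simp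

lemma scaleC_minus_right: "a *\<^sub>C (- (x::'a::complex_hilbert)) = - (a *\<^sub>C x)"
proof -
  have "a *\<^sub>C (- x) = a *\<^sub>C ((-1) *\<^sub>C x)" by (simp add: scaleC_minus1)
  also have "\<dots> = (-1) *\<^sub>C (a *\<^sub>C x)" by (simp add: scaleC_scaleC)
  also have "\<dots> = - (a *\<^sub>C x)" by (rule scaleC_minus1)
  finally show ?thesis .
qed

lemma scaleC_minus_left: "(- a) *\<^sub>C (x::'a::complex_hilbert) = - (a *\<^sub>C x)"
proof -
  have "(- a) *\<^sub>C x = ((-1) * a) *\<^sub>C x" by simp
  also have "\<dots> = (-1) *\<^sub>C (a *\<^sub>C x)" by (simp only: scaleC_scaleC)
  also have "\<dots> = - (a *\<^sub>C x)" by (rule scaleC_minus1)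
  finally show ?thesis .
qed

lemma scaleC_diff_right: "a *\<^sub>C ((x::'a::complex_hilbert) - y) = a *\<^sub>C x - a *\<^sub>C y"
  by (simp only: diff_conv_add_uminus scaleC_add_right scaleC_minus_right)

lemma scaleC_diff_left: "(a - b) *\<^sub>C (x::'a::complex_hilbert) = a *\<^sub>C x - b *\<^sub>C x"
  by (simp only: diff_conv_add_uminus scaleC_add_left scaleC_minus_left)

lemma cinner_commute': "cnj (cinner y x) = cinner (x::'a::complex_hilbert) y"
  by (simp add: cinner_commute[of x y])

lemma cinner_add_right: "cinner (x::'a::complex_hilbert) (y + z) = cinner x y + cinner x z"
proof -
  have "cnj (cinner x (y + z)) = cnj (cinner x y + cinner x z)"
    by (simp add: cinner_commute' cinner_add_left)
  from arg_cong[OF this, of cnj] show ?thesis by simp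
qed

lemma cinner_scaleC_right: "cinner (x::'a::complex_hilbert) (a *\<^sub>C y) = cnj a * cinner x y"
proof -
  have "cnj (cinner x (a *\<^sub>C y)) = cnj (cnj a * cinner x y)"
    by (simp add: cinner_commute' cinner_scaleC_left)
  from arg_cong[OF this, of cnj] show ?thesis by simp
qed

lemma cinner_zero_left[simp]: "cinner (0::'a::complex_hilbert) y = 0"
proof -
  have "cinner ((0::complex) *\<^sub>C (0::'a)) y = 0 * cinner 0 y" by (rule cinner_scaleC_left)
  then show ?thesis by simp
qed

lemma cinner_zero_right[simp]: "cinner (x::'a::complex_hilbert) 0 = 0"
proof -
  have "cnj (cinner x 0) = 0" by (simp add: cinner_commute')
  then show ?thesis by simp
qed

lemma cinner_minus_left: "cinner (- (x::'a::complex_hilbert)) y = - cinner x y"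
proof -
  have "cinner (- x) y + cinner x y = 0" by (simp flip: cinner_add_left)
  then show ?thesis by (simp add: eq_neg_iff_add_eq_0)
qed

lemma cinner_minus_right: "cinner (x::'a::complex_hilbert) (- y) = - cinner x y"
proof -
  have "cinner x (- y) + cinner x y = 0" by (simp flip: cinner_add_right)
  then show ?thesis by (simp add: eq_neg_iff_add_eq_0)
qed

lemma cinner_diff_left: "cinner ((x::'a::complex_hilbert) - y) z = cinner x z - cinner y z"
  by (simp only: diff_conv_add_uminus cinner_add_left cinner_minus_left)

lemma cinner_diff_right: "cinner (x::'a::complex_hilbert) (y - z) = cinner x y - cinner x z"
  by (simp only: diff_conv_add_uminus cinner_add_right cinner_minus_right)

lemma scaleR_as_scaleC: "r *\<^sub>R (x::'a::complex_hilbert) = complex_of_real r *\<^sub>C x"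
  by (rule scaleC_of_real[symmetric])

lemma cinner_scaleR_left: "cinner (r *\<^sub>R (x::'a::complex_hilbert)) y = of_real r * cinner x y"
  by (simp only: scaleR_as_scaleC cinner_scaleC_left)

lemma cinner_scaleR_right: "cinner (x::'a::complex_hilbert) (r *\<^sub>R y) = of_real r * cinner x y"
  by (simp only: scaleR_as_scaleC cinner_scaleC_right complex_cnj_complex_of_real)

lemma norm_sq_cinner: "(norm (x::'a::complex_hilbert))\<^sup>2 = Re (cinner x x)"
  by (simp add: cinner_self_norm)

lemma cinner_self_eq_0: "cinner (x::'a::complex_hilbert) x = 0 \<longleftrightarrow> x = 0"
  by (simp add: cinner_self_norm)

lemma cinner_ext: "(\<And>z. cinner z (x::'a::complex_hilbert) = cinner z y) \<Longrightarrow> x = y"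
proof -
  assume h: "\<And>z. cinner z x = cinner z y"
  have "cinner (x - y) (x - y) = 0"
    by (simp only: cinner_diff_right h diff_self)
  then show "x = y" by (simp add: cinner_self_eq_0)
qed

lemma cinner_add_cnj: "cinner (x::'a::complex_hilbert) y + cinner y x = of_real (2 * Re (cinner x y))"
proof -
  have "cinner y x = cnj (cinner x y)" by (rule cinner_commute)
  then show ?thesis by (simp add: complex_add_cnj)
qed

lemma norm_add_sq: "(norm ((x::'a::complex_hilbert) + y))\<^sup>2 = (norm x)\<^sup>2 + (norm y)\<^sup>2 + 2 * Re (cinner x y)"
proof -
  have "cinner (x+y) (x+y) = cinner x x + cinner y y + (cinner x y + cinner y x)"
    by (simp add: cinner_add_left cinner_add_right)
  then show ?thesis by (simp add: norm_sq_cinner cinner_add_cnj)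
qed

lemma norm_diff_sq: "(norm ((x::'a::complex_hilbert) - y))\<^sup>2 = (norm x)\<^sup>2 + (norm y)\<^sup>2 - 2 * Re (cinner x y)"
proof -
  have "cinner (x-y) (x-y) = cinner x x + cinner y y - (cinner x y + cinner y x)"
    by (simp add: cinner_diff_left cinner_diff_right)
  then show ?thesis by (simp add: norm_sq_cinner cinner_add_cnj)
qed

lemma norm_scaleC: "norm (a *\<^sub>C (x::'a::complex_hilbert)) = cmod a * norm x"
proof -
  have "cinner (a *\<^sub>C x) (a *\<^sub>C x) = (a * cnj a) * cinner x x"
    by (simp add: cinner_scaleC_left cinner_scaleC_right)
  also have "a * cnj a = of_real ((cmod a)\<^sup>2)" by (simp add: complex_norm_square[symmetric])
  finally have "(norm (a *\<^sub>C x))\<^sup>2 = (cmod a * norm x)\<^sup>2"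
    by (simp add: cinner_self_norm power_mult_distrib flip: of_real_mult of_real_power)
  then show ?thesis by (simp add: power2_eq_iff_nonneg)
qed

lemma cauchy_schwarz: "cmod (cinner (x::'a::complex_hilbert) y) \<le> norm x * norm y"
proof (cases "y = 0")
  case True then show ?thesis by simp
next
  case False
  define c where "c = cinner x y / of_real ((norm y)\<^sup>2)"
  define z where "z = x - c *\<^sub>C y"
  have ny: "norm y > 0" using False by simp
  have yy: "cinner y y = of_real ((norm y)\<^sup>2)" by (rule cinner_self_norm)
  have zy: "cinner z y = 0"
    using ny by (simp add: z_def cinner_diff_left cinner_scaleC_left yy c_def)
  have yz: "cinner y z = 0" using zy cinner_commute[of y z] by simp
  have "cinner x x = cinner (z + c *\<^sub>C y) (z + c *\<^sub>C y)" by (simp add: z_def)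
  also have "\<dots> = cinner z z + c * cnj c * cinner y y"
    using zy yz by (simp add: cinner_add_left cinner_add_right cinner_scaleC_left cinner_scaleC_right)
  finally have "(norm x)\<^sup>2 = (norm z)\<^sup>2 + (cmod c)\<^sup>2 * (norm y)\<^sup>2"
    by (simp add: cinner_self_norm complex_norm_square[symmetric] flip: of_real_mult of_real_add of_real_power)
  then have "(cmod c)\<^sup>2 * (norm y)\<^sup>2 \<le> (norm x)\<^sup>2" by simp
  moreover have "cmod c = cmod (cinner x y) / (norm y)\<^sup>2"
    by (simp add: c_def norm_divide norm_power)
  ultimately have "(cmod (cinner x y))\<^sup>2 / (norm y)\<^sup>2 \<le> (norm x)\<^sup>2"
    using ny by (simp add: power_divide field_simps power2_eq_square)
  then have "(cmod (cinner x y))\<^sup>2 \<le> (norm x * norm y)\<^sup>2"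
    using ny by (simp add: divide_le_eq power_mult_distrib)
  then show ?thesis by (simp add: power2_le_iff_abs_le)
qed



lemma parallelogram:
  "(norm ((a::'a::complex_hilbert) - b))\<^sup>2 = 2 * (norm a)\<^sup>2 + 2 * (norm b)\<^sup>2 - (norm (a + b))\<^sup>2"
  using norm_add_sq[of a b] norm_diff_sq[of a b] by simp

lemma riesz:
  fixes f :: "'a::complex_hilbert \<Rightarrow> complex"
  assumes add: "\<And>x y. f (x + y) = f x + f y"
    and sc: "\<And>c x. f (c *\<^sub>C x) = c * f x"
    and bd: "\<And>x. cmod (f x) \<le> norm x * K"
  shows "\<exists>z. \<forall>x. f x = cinner x z"
proof (cases "\<forall>x. f x = 0")
  case True
  then show ?thesis by (intro exI[of _ 0]) simp
next
  case False
  then obtain x0 where fx0: "f x0 \<noteq> 0" by blast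
  have scR: "f (r *\<^sub>R x) = r *\<^sub>R f x" for r x
    by (simp add: scaleR_as_scaleC sc scaleR_conv_of_real)
  have bl: "bounded_linear f"
    by (rule bounded_linear_intro[OF add scR bd])
  interpret f: bounded_linear f by (rule bl)
  define S where "S = {(norm (x0 - n))\<^sup>2 | n. f n = 0}"
  define d2 where "d2 = Inf S"
  have S_ne: "S \<noteq> {}" unfolding S_def using f.zero by blast
  have S_bdd: "bdd_below S" unfolding S_def by (intro bdd_belowI[of _ 0]) auto
  have d2_le: "d2 \<le> (norm (x0 - n))\<^sup>2" if "f n = 0" for n
    unfolding d2_def using that S_bdd by (intro cInf_lower) (auto simp: S_def)
  have "\<exists>n. f n = 0 \<and> (norm (x0 - n))\<^sup>2 < d2 + inverse (real (Suc k))" for k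
  proof -
    have "Inf S < d2 + inverse (real (Suc k))" unfolding d2_def by simp
    from cInf_lessD[OF S_ne this] show ?thesis unfolding S_def by auto
  qed
  then have "\<forall>k. \<exists>n. f n = 0 \<and> (norm (x0 - n))\<^sup>2 < d2 + inverse (real (Suc k))"
    by blast
  from choice[OF this] obtain s where sall: "\<forall>k. f (s k) = 0 \<and> (norm (x0 - s k))\<^sup>2 < d2 + inverse (real (Suc k))"
    by blast
  have s0: "\<And>k. f (s k) = 0" and sd: "\<And>k. (norm (x0 - s k))\<^sup>2 < d2 + inverse (real (Suc k))"
    using sall by auto
  have cb: "(norm (s j - s k))\<^sup>2 \<le> 2 * inverse (real (Suc j)) + 2 * inverse (real (Suc k))" for j k
  proof -
    define m where "m = (1/2) *\<^sub>R (s j + s k)"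
    have fm: "f m = 0" by (simp add: m_def f.scaleR f.add s0)
    have e1: "(x0 - s k) - (x0 - s j) = s j - s k" by simp
    have e2: "(x0 - s k) + (x0 - s j) = 2 *\<^sub>R (x0 - m)"
    proof -
      have "2 *\<^sub>R (x0 - m) = 2 *\<^sub>R x0 - (s j + s k)"
        by (simp add: m_def scaleR_diff_right)
      then show ?thesis by (simp add: scaleR_2)
    qed
    have "(norm (s j - s k))\<^sup>2 = 2 * (norm (x0 - s k))\<^sup>2 + 2 * (norm (x0 - s j))\<^sup>2
          - (norm (2 *\<^sub>R (x0 - m)))\<^sup>2"
      using parallelogram[of "x0 - s k" "x0 - s j"] by (simp only: e1 e2)
    also have "(norm (2 *\<^sub>R (x0 - m)))\<^sup>2 = 4 * (norm (x0 - m))\<^sup>2"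
      by (simp add: power_mult_distrib)
    finally show ?thesis using d2_le[OF fm] sd[of j] sd[of k] by linarith
  qed
  have "Cauchy s"
  proof (rule CauchyI)
    fix e :: real assume e: "0 < e"
    obtain M :: nat where M: "inverse (e\<^sup>2 / 4) < real M"
      using reals_Archimedean2 by blast
    have e2: "0 < e\<^sup>2 / 4" using e by simp
    have Minv: "inverse (real (Suc M)) < e\<^sup>2 / 4"
    proof -
      have "inverse (e\<^sup>2 / 4) < real (Suc M)" using M by simp
      then show ?thesis using e2
        by (metis inverse_inverse_eq inverse_less_imp_less of_nat_0_less_iff zero_less_Suc)
    qed
    show "\<exists>M. \<forall>m\<ge>M. \<forall>n\<ge>M. norm (s m - s n) < e"
    proof (intro exI allI impI)
      fix m n assume mM: "M \<le> m" and nM: "M \<le> n"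
      have "inverse (real (Suc m)) \<le> inverse (real (Suc M))"
        using mM by (intro le_imp_inverse_le) auto
      moreover have "inverse (real (Suc n)) \<le> inverse (real (Suc M))"
        using nM by (intro le_imp_inverse_le) auto
      ultimately have "(norm (s m - s n))\<^sup>2 < e\<^sup>2"
        using cb[of m n] Minv by linarith
      then show "norm (s m - s n) < e"
        by (rule power2_less_imp_less[OF _ less_imp_le[OF e]])
    qed
  qed
  then have "convergent s" by (simp add: Cauchy_convergent_iff)
  then obtain n where lim: "s \<longlonglongrightarrow> n"
    unfolding convergent_def by blast
  have fn: "f n = 0"
  proof -
    have "(\<lambda>k. f (s k)) \<longlonglongrightarrow> f n" by (rule f.tendsto[OF lim])
    moreover have "(\<lambda>k. f (s k)) \<longlonglongrightarrow> 0" using s0 by simp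
    ultimately show ?thesis using LIMSEQ_unique by blast
  qed
  define u where "u = x0 - n"
  have nu_le: "(norm u)\<^sup>2 \<le> d2"
  proof (rule LIMSEQ_le)
    show "(\<lambda>k. (norm (x0 - s k))\<^sup>2) \<longlonglongrightarrow> (norm u)\<^sup>2"
      unfolding u_def by (intro tendsto_intros lim)
    show "(\<lambda>k. d2 + inverse (real (Suc k))) \<longlonglongrightarrow> d2"
      using tendsto_add[OF tendsto_const LIMSEQ_inverse_real_of_nat, of d2] by simp
    show "\<exists>N. \<forall>k\<ge>N. (norm (x0 - s k))\<^sup>2 \<le> d2 + inverse (real (Suc k))"
      using sd less_imp_le by blast
  qed
  have fu: "f u = f x0" by (simp add: u_def f.diff fn)
  have u0: "u \<noteq> 0" using fu fx0 by auto
  have orth: "cinner u m = 0" if fm: "f m = 0" for m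
  proof (rule ccontr)
    assume c0: "cinner u m \<noteq> 0"
    then have m0: "m \<noteq> 0" by auto
    define c where "c = cinner u m"
    define t where "t = c / of_real ((norm m)\<^sup>2)"
    have nm: "norm m > 0" using m0 by simp
    have "f (n + t *\<^sub>C m) = 0" by (simp add: add sc fn fm)
    then have "d2 \<le> (norm (x0 - (n + t *\<^sub>C m)))\<^sup>2" by (rule d2_le)
    also have "x0 - (n + t *\<^sub>C m) = u - t *\<^sub>C m" by (simp add: u_def)
    also have "(norm (u - t *\<^sub>C m))\<^sup>2 = (norm u)\<^sup>2 + (cmod t * norm m)\<^sup>2 - 2 * Re (cnj t * c)"
      by (simp add: norm_diff_sq norm_scaleC cinner_scaleC_right c_def)
    also have "cnj t * c = of_real ((cmod c)\<^sup>2 / (norm m)\<^sup>2)"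
    proof -
      have "cnj t * c = (c * cnj c) / of_real ((norm m)\<^sup>2)"
        by (simp add: t_def)
      also have "c * cnj c = of_real ((cmod c)\<^sup>2)" by (rule complex_norm_square[symmetric])
      finally show ?thesis by simp
    qed
    also have "(cmod t * norm m)\<^sup>2 = (cmod c)\<^sup>2 / (norm m)\<^sup>2"
    proof -
      have ct: "cmod t = cmod c / (norm m)\<^sup>2" unfolding t_def
        by (simp add: norm_divide del: of_real_power)
      show ?thesis using nm by (simp add: ct power2_eq_square)
    qed
    finally have "d2 \<le> (norm u)\<^sup>2 - (cmod c)\<^sup>2 / (norm m)\<^sup>2" by simp
    moreover have "(cmod c)\<^sup>2 / (norm m)\<^sup>2 > 0" using c0 nm by (simp add: c_def)
    ultimately show False using nu_le by linarith
  qed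
  define z where "z = (cnj (f u) / of_real ((norm u)\<^sup>2)) *\<^sub>C u"
  have "f x = cinner x z" for x
  proof -
    define v where "v = x - (f x / f u) *\<^sub>C u"
    have fv: "f v = 0" using fu fx0 by (simp add: v_def f.diff sc)
    have "cinner v u = 0" using orth[OF fv] by (metis cinner_commute complex_cnj_zero)
    then have xu: "cinner x u = (f x / f u) * of_real ((norm u)\<^sup>2)"
      by (simp add: v_def cinner_diff_left cinner_scaleC_left cinner_self_norm)
    have "cinner x z = (f u / of_real ((norm u)\<^sup>2)) * cinner x u"
      by (simp add: z_def cinner_scaleC_right)
    also have "\<dots> = f x" using xu u0 fu fx0 by (simp add: field_simps)
    finally show ?thesis by simp
  qed
  then show ?thesis by blast
qed



lemma bcl_add: "bounded_clinear_op T \<Longrightarrow> T (x + y) = T x + T y"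
  unfolding bounded_clinear_op_def by blast

lemma bcl_sc: "bounded_clinear_op T \<Longrightarrow> T (c *\<^sub>C x) = c *\<^sub>C T x"
  unfolding bounded_clinear_op_def by blast

lemma bcl_bd: "bounded_clinear_op T \<Longrightarrow> \<exists>K. \<forall>x. norm (T x) \<le> norm x * K"
  unfolding bounded_clinear_op_def by blast

lemma adjoint_prop:
  fixes T :: "'a::complex_hilbert \<Rightarrow> 'a"
  assumes bT: "bounded_clinear_op T"
  shows "cinner (T x) y = cinner x (cadjoint T y)"
proof -
  obtain K where K: "\<And>x. norm (T x) \<le> norm x * K" using bcl_bd[OF bT] by blast
  have "\<forall>y. \<exists>z. \<forall>x. cinner (T x) y = cinner x z"
  proof
    fix y
    show "\<exists>z. \<forall>x. cinner (T x) y = cinner x z"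
    proof (rule riesz[where K = "K * norm y"])
      fix x1 x2 show "cinner (T (x1 + x2)) y = cinner (T x1) y + cinner (T x2) y"
        by (simp add: bcl_add[OF bT] cinner_add_left)
    next
      fix c x show "cinner (T (c *\<^sub>C x)) y = c * cinner (T x) y"
        by (simp add: bcl_sc[OF bT] cinner_scaleC_left)
    next
      fix x
      have "cmod (cinner (T x) y) \<le> norm (T x) * norm y" by (rule cauchy_schwarz)
      also have "\<dots> \<le> norm x * K * norm y" by (intro mult_right_mono K) simp
      finally show "cmod (cinner (T x) y) \<le> norm x * (K * norm y)" by (simp add: mult.assoc)
    qed
  qed
  from choice[OF this] obtain S where "\<forall>y x. cinner (T x) y = cinner x (S y)" by blast
  then have "\<exists>S. \<forall>x y. cinner (T x) y = cinner x (S y)" by blast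
  from someI_ex[OF this] show ?thesis unfolding cadjoint_def by blast
qed

lemma hom_bound:
  fixes g :: "'a::real_normed_vector \<Rightarrow> 'b::real_normed_vector"
  assumes hom: "\<And>r x. g (r *\<^sub>R x) = r *\<^sub>R g x"
    and b: "\<And>x. norm x = 1 \<Longrightarrow> norm (g x) \<le> B"
  shows "norm (g x) \<le> B * norm x"
proof (cases "x = 0")
  case True
  have "g 0 = 0" using hom[of 0 0] by simp
  then show ?thesis using True by simp
next
  case False
  define u where "u = inverse (norm x) *\<^sub>R x"
  have nu: "norm u = 1" using False by (simp add: u_def)
  have "x = norm x *\<^sub>R u" using False by (simp add: u_def)
  then have "g x = norm x *\<^sub>R g u" by (metis hom)
  then have "norm (g x) = norm x * norm (g u)" by simp
  also have "\<dots> \<le> norm x * B" by (intro mult_left_mono b nu) simp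
  finally show ?thesis by (simp add: mult.commute)
qed

lemma R_bound:
  fixes T A :: "'a::complex_hilbert \<Rightarrow> 'a"
  assumes adjTA: "\<And>x y. cinner (A x) y = cinner x (T y)"
    and w: "\<And>z. cmod (cinner (T z) z) \<le> w * (norm z)\<^sup>2"
    and Tadd: "\<And>x y. T (x + y) = T x + T y"
    and Tdiff: "\<And>x y. T (x - y) = T x - T y"
    and T0: "T 0 = 0" and A0: "A 0 = 0"
    and cm: "cmod c = 1" and w0: "0 \<le> w"
  shows "norm ((1/2) *\<^sub>C (c *\<^sub>C T x + cnj c *\<^sub>C A x)) \<le> w * norm x"
proof -
  define R where "R = (\<lambda>x. (1/2) *\<^sub>C (c *\<^sub>C T x + cnj c *\<^sub>C A x))"
  have key: "4 * Re (cinner (R x) y) \<le> 2 * w * ((norm x)\<^sup>2 + (norm y)\<^sup>2)" for y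
  proof -
    define a where "a = cinner (T x) y"
    define b where "b = cinner (T y) x"
    define q1 where "q1 = cinner (T (x + y)) (x + y)"
    define q2 where "q2 = cinner (T (x - y)) (x - y)"
    have q1e: "q1 = cinner (T x) x + a + b + cinner (T y) y"
      by (simp add: q1_def a_def b_def Tadd cinner_add_left cinner_add_right)
    have q2e: "q2 = cinner (T x) x - a - b + cinner (T y) y"
      by (simp add: q2_def a_def b_def Tdiff cinner_diff_left cinner_diff_right)
    have d: "c * q1 - c * q2 = 2 * (c * a + c * b)"
      by (simp add: q1e q2e algebra_simps)
    have xTy: "cinner x (T y) = cnj b" by (simp add: b_def cinner_commute')
    have r: "2 * cinner (R x) y = c * a + cnj (c * b)"
      by (simp add: R_def cinner_scaleC_left cinner_add_left adjTA xTy a_def)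
    have "4 * Re (cinner (R x) y) = Re (c * q1) - Re (c * q2)"
    proof -
      have "4 * Re (cinner (R x) y) = 2 * Re (2 * cinner (R x) y)" by simp
      also have "\<dots> = Re (2 * (c * a + c * b))" by (simp only: r) simp
      also have "\<dots> = Re (c * q1 - c * q2)" by (simp only: d)
      finally show ?thesis by simp
    qed
    also have "\<dots> \<le> cmod (c * q1) + cmod (c * q2)"
      using abs_Re_le_cmod[of "c * q1"] abs_Re_le_cmod[of "c * q2"] by linarith
    also have "\<dots> = cmod q1 + cmod q2" by (simp add: norm_mult cm)
    also have "\<dots> \<le> w * (norm (x + y))\<^sup>2 + w * (norm (x - y))\<^sup>2"
      unfolding q1_def q2_def by (intro add_mono w)
    also have "\<dots> = 2 * w * ((norm x)\<^sup>2 + (norm y)\<^sup>2)"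
      by (simp add: norm_add_sq norm_diff_sq algebra_simps)
    finally show ?thesis .
  qed
  have "norm (R x) \<le> w * norm x"
  proof (cases "R x = 0 \<or> x = 0")
    case True
    then show ?thesis
    proof
      assume "x = 0" then show ?thesis by (simp add: R_def T0 A0)
    next
      assume "R x = 0"
      moreover note w0
      ultimately show ?thesis by simp
    qed
  next
    case False
    then have nR: "norm (R x) > 0" and nx: "norm x > 0" by auto
    define s where "s = norm x / norm (R x)"
    have "4 * Re (cinner (R x) (s *\<^sub>R R x)) \<le> 2 * w * ((norm x)\<^sup>2 + (norm (s *\<^sub>R R x))\<^sup>2)"
      by (rule key)
    moreover have "Re (cinner (R x) (s *\<^sub>R R x)) = norm x * norm (R x)"
      using nR by (simp add: cinner_scaleR_right cinner_self_norm s_def power2_eq_square)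
    moreover have "norm (s *\<^sub>R R x) = norm x"
      using nR by (simp add: s_def)
    ultimately have "4 * (norm x * norm (R x)) \<le> 4 * w * (norm x * norm x)"
      by (simp add: power2_eq_square)
    then have "norm x * norm (R x) \<le> norm x * (w * norm x)" by (simp add: algebra_simps)
    then show ?thesis using nx by simp
  qed
  then show ?thesis by (simp add: R_def)
qed



lemma alpha_le:
  fixes S :: "'a::complex_hilbert \<Rightarrow> 'a"
  assumes "norm x = 1" shows "alpha_op S \<le> (norm (S x))\<^sup>2"
  unfolding alpha_op_def
  by (rule cInf_lower) (use assms in \<open>auto intro: bdd_belowI[of _ 0]\<close>)

theorem theorem2p1:
  fixes T :: "'a::complex_hilbert \<Rightarrow> 'a"
  assumes "\<exists>x::'a. x \<noteq> 0"
    and "bounded_clinear_op T"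
  shows "(onorm T)\<^sup>2 + max (alpha_op T) (alpha_op (cadjoint T))
           \<le> 2 * (numrad T)\<^sup>2 + D_op T"
proof -
  note bT = assms(2)
  obtain K where K: "\<And>x. norm (T x) \<le> norm x * K" using bcl_bd[OF bT] by blast
  define A where "A = cadjoint T"
  have adj: "\<And>x y. cinner (T x) y = cinner x (A y)"
    unfolding A_def by (rule adjoint_prop[OF bT])
  have adjA: "\<And>x y. cinner (A x) y = cinner x (T y)"
  proof -
    fix x y
    have "cinner (A x) y = cnj (cinner y (A x))" by (rule cinner_commute)
    also have "\<dots> = cnj (cinner (T y) x)" by (simp add: adj)
    also have "\<dots> = cinner x (T y)" by (rule cinner_commute')
    finally show "cinner (A x) y = cinner x (T y)" .
  qed
  have Tadd: "\<And>x y. T (x + y) = T x + T y" by (rule bcl_add[OF bT])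
  have Tsc: "\<And>c x. T (c *\<^sub>C x) = c *\<^sub>C T x" by (rule bcl_sc[OF bT])
  have TR: "\<And>r x. T (r *\<^sub>R x) = r *\<^sub>R T x" by (simp add: scaleR_as_scaleC Tsc)
  have T0: "T 0 = 0" using TR[of 0 0] by simp
  have Tdiff: "\<And>x y. T (x - y) = T x - T y"
  proof -
    fix x y
    have "T (x - y + y) = T (x - y) + T y" by (rule Tadd)
    then show "T (x - y) = T x - T y" by (simp add: eq_diff_eq)
  qed
  have Aadd: "\<And>x y. A (x + y) = A x + A y"
    by (rule cinner_ext) (simp add: adj[symmetric] cinner_add_right)
  have Asc: "\<And>c x. A (c *\<^sub>C x) = c *\<^sub>C A x"
    by (rule cinner_ext) (simp add: adj[symmetric] cinner_scaleC_right)
  have AR: "\<And>r x. A (r *\<^sub>R x) = r *\<^sub>R A x" by (simp add: scaleR_as_scaleC Asc)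
  have A0: "A 0 = 0" using AR[of 0 0] by simp
  obtain x1 :: 'a where x1: "x1 \<noteq> 0" using assms(1) by blast
  define u1 where "u1 = inverse (norm x1) *\<^sub>R x1"
  have u1: "norm u1 = 1" using x1 by (simp add: u1_def)
  define W where "W = {cmod (cinner (T x) x) | x. norm x = 1}"
  define w where "w = numrad T"
  have w_def': "w = Sup W" by (simp add: w_def W_def numrad_def)
  have bddW: "bdd_above W"
  proof (rule bdd_aboveI[of _ K])
    fix v assume "v \<in> W"
    then obtain x where v: "v = cmod (cinner (T x) x)" and nx: "norm x = 1"
      unfolding W_def by blast
    have "v \<le> norm (T x) * norm x" unfolding v by (rule cauchy_schwarz)
    also have "\<dots> \<le> K" using K[of x] nx by simp
    finally show "v \<le> K" .
  qed
  have wle: "cmod (cinner (T x) x) \<le> w" if "norm x = 1" for x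
    unfolding w_def' by (rule cSup_upper) (use that bddW in \<open>auto simp: W_def\<close>)
  have w0: "0 \<le> w" using wle[OF u1] by (meson norm_ge_zero order_trans)
  have wz: "cmod (cinner (T z) z) \<le> w * (norm z)\<^sup>2" for z
  proof (cases "z = 0")
    case True then show ?thesis by (simp add: T0)
  next
    case False
    define u where "u = inverse (norm z) *\<^sub>R z"
    have nu: "norm u = 1" using False by (simp add: u_def)
    have zu: "z = norm z *\<^sub>R u" using False by (simp add: u_def)
    have "cinner (T z) z = of_real (norm z) * (of_real (norm z) * cinner (T u) u)"
      by (subst (1 2) zu) (simp add: TR cinner_scaleR_left cinner_scaleR_right)
    then have "cmod (cinner (T z) z) = (norm z)\<^sup>2 * cmod (cinner (T u) u)"
      by (simp add: norm_mult power2_eq_square)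
    also have "\<dots> \<le> (norm z)\<^sup>2 * w" by (intro mult_left_mono wle nu) simp
    finally show ?thesis by (simp add: mult.commute)
  qed
  define T1 where "T1 = re_part T"
  define T2 where "T2 = im_part T"
  have T1eq: "T1 x = (1/2) *\<^sub>C (1 *\<^sub>C T x + cnj 1 *\<^sub>C A x)" for x
    by (simp add: T1_def re_part_def A_def scaleC_one)
  have c1: "1 / (2 * \<i>) = (1/2) * (- \<i>)" by (simp add: complex_eq_iff)
  have T2eq: "T2 x = (1/2) *\<^sub>C ((- \<i>) *\<^sub>C T x + cnj (- \<i>) *\<^sub>C A x)" for x
  proof -
    have "T2 x = ((1/2) * (- \<i>)) *\<^sub>C T x - ((1/2) * (- \<i>)) *\<^sub>C A x"
      by (simp only: T2_def im_part_def A_def c1 scaleC_diff_right)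
    also have "\<dots> = ((1/2) * (- \<i>)) *\<^sub>C T x + ((1/2) * \<i>) *\<^sub>C A x"
    proof -
      have e: "- ((1/2) * (- \<i>)) = (1/2) * \<i>" by simp
      show ?thesis by (simp only: diff_conv_add_uminus scaleC_minus_left[symmetric] e)
    qed
    also have "\<dots> = (1/2) *\<^sub>C ((- \<i>) *\<^sub>C T x + cnj (- \<i>) *\<^sub>C A x)"
      by (simp only: scaleC_add_right scaleC_scaleC complex_cnj_minus complex_cnj_i minus_minus)
    finally show ?thesis .
  qed
  have Rb1: "norm (T1 x) \<le> w * norm x" for x
    unfolding T1eq by (rule R_bound[OF adjA wz Tadd Tdiff T0 A0]) (simp_all add: w0)
  have Rb2: "norm (T2 x) \<le> w * norm x" for x
    unfolding T2eq by (rule R_bound[OF adjA wz Tadd Tdiff T0 A0]) (simp_all add: w0)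
  have T1add: "T1 (x + y) = T1 x + T1 y" for x y
    by (simp add: T1_def re_part_def A_def[symmetric] Tadd Aadd scaleC_add_right add_ac)
  have T2add: "T2 (x + y) = T2 x + T2 y" for x y
    by (simp add: T2_def im_part_def A_def[symmetric] Tadd Aadd scaleC_diff_right scaleC_add_right add_ac diff_add_eq add_diff_eq)
  have T1R: "T1 (r *\<^sub>R x) = r *\<^sub>R T1 x" for r x
    by (simp add: T1_def re_part_def A_def[symmetric] scaleR_as_scaleC Tsc Asc scaleC_add_right scaleC_scaleC mult.commute)
  have T2R: "T2 (r *\<^sub>R x) = r *\<^sub>R T2 x" for r x
    by (simp add: T2_def im_part_def A_def[symmetric] scaleR_as_scaleC Tsc Asc scaleC_diff_right scaleC_scaleC mult.commute)
  have bl1: "bounded_linear T1"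
    by (rule bounded_linear_intro[OF T1add T1R, of w]) (simp add: Rb1 mult.commute)
  have bl2: "bounded_linear T2"
    by (rule bounded_linear_intro[OF T2add T2R, of w]) (simp add: Rb2 mult.commute)
  define p where "p = onorm T1"
  define q where "q = onorm T2"
  have p0: "0 \<le> p" and q0: "0 \<le> q" unfolding p_def q_def using bl1 bl2 by (simp_all add: onorm_pos_le)
  have pw: "p \<le> w" unfolding p_def by (rule onorm_bound[OF w0 Rb1])
  have qw: "q \<le> w" unfolding q_def by (rule onorm_bound[OF w0 Rb2])
  have D: "D_op T = 2 * min (p\<^sup>2) (q\<^sup>2)" by (simp add: D_op_def p_def q_def T1_def T2_def)
  define Mx where "Mx = 2 * w\<^sup>2 + D_op T"
  have pq: "p\<^sup>2 + q\<^sup>2 \<le> w\<^sup>2 + min (p\<^sup>2) (q\<^sup>2)"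
  proof -
    have "p\<^sup>2 \<le> w\<^sup>2" by (rule power_mono[OF pw p0])
    moreover have "q\<^sup>2 \<le> w\<^sup>2" by (rule power_mono[OF qw q0])
    ultimately show ?thesis by (simp add: min_def)
  qed
  have ident: "(norm (T x))\<^sup>2 + (norm (A x))\<^sup>2 = 2 * ((norm (T1 x))\<^sup>2 + (norm (T2 x))\<^sup>2)" for x
  proof -
    have n1: "norm (T1 x) = (1/2) * norm (T x + A x)"
      by (simp add: T1_def re_part_def A_def norm_scaleC)
    have n2: "norm (T2 x) = (1/2) * norm (T x - A x)"
      by (simp add: T2_def im_part_def A_def norm_scaleC norm_divide norm_mult)
    have s1: "(norm (T x + A x))\<^sup>2 = (norm (T x))\<^sup>2 + (norm (A x))\<^sup>2 + 2 * Re (cinner (T x) (A x))"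
      by (rule norm_add_sq)
    have s2: "(norm (T x - A x))\<^sup>2 = (norm (T x))\<^sup>2 + (norm (A x))\<^sup>2 - 2 * Re (cinner (T x) (A x))"
      by (rule norm_diff_sq)
    show ?thesis unfolding n1 n2 power_mult_distrib s1 s2 by (simp add: field_simps)
  qed
  have bound1: "(norm (T x))\<^sup>2 + (norm (A x))\<^sup>2 \<le> Mx * (norm x)\<^sup>2" for x
  proof -
    have a: "(norm (T1 x))\<^sup>2 \<le> p\<^sup>2 * (norm x)\<^sup>2"
    proof -
      have "norm (T1 x) \<le> p * norm x" unfolding p_def by (rule onorm[OF bl1])
      then have "(norm (T1 x))\<^sup>2 \<le> (p * norm x)\<^sup>2" by (rule power_mono) simp
      then show ?thesis by (simp add: power_mult_distrib)
    qed
    have b: "(norm (T2 x))\<^sup>2 \<le> q\<^sup>2 * (norm x)\<^sup>2"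
    proof -
      have "norm (T2 x) \<le> q * norm x" unfolding q_def by (rule onorm[OF bl2])
      then have "(norm (T2 x))\<^sup>2 \<le> (q * norm x)\<^sup>2" by (rule power_mono) simp
      then show ?thesis by (simp add: power_mult_distrib)
    qed
    have "(p\<^sup>2 + q\<^sup>2) * (norm x)\<^sup>2 \<le> (w\<^sup>2 + min (p\<^sup>2) (q\<^sup>2)) * (norm x)\<^sup>2"
      by (rule mult_right_mono[OF pq]) simp
    then show ?thesis unfolding ident Mx_def D using a b by (simp add: algebra_simps)
  qed
  define N1 where "N1 = Mx - alpha_op A"
  have unitT: "(norm (T x))\<^sup>2 \<le> N1" if "norm x = 1" for x
    using bound1[of x] alpha_le[OF that, of A] that by (simp add: N1_def)
  have N1: "0 \<le> N1" using unitT[OF u1] by (meson order_trans zero_le_power2)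
  have "norm (T x) \<le> sqrt N1 * norm x" for x
    by (rule hom_bound[OF TR]) (rule real_le_rsqrt[OF unitT])
  then have "onorm T \<le> sqrt N1" by (intro onorm_bound) (simp_all add: N1)
  moreover have blT: "bounded_linear T"
    by (rule bounded_linear_intro[OF Tadd TR K])
  ultimately have "(onorm T)\<^sup>2 \<le> (sqrt N1)\<^sup>2" by (intro power_mono) (simp_all add: onorm_pos_le)
  then have e1: "(onorm T)\<^sup>2 + alpha_op A \<le> Mx" using N1 by (simp add: N1_def)
  define N2 where "N2 = Mx - alpha_op T"
  have unitA: "(norm (A x))\<^sup>2 \<le> N2" if "norm x = 1" for x
    using bound1[of x] alpha_le[OF that, of T] that by (simp add: N2_def)
  have N2: "0 \<le> N2" using unitA[OF u1] by (meson order_trans zero_le_power2)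
  have Ab: "norm (A y) \<le> sqrt N2 * norm y" for y
    by (rule hom_bound[OF AR]) (rule real_le_rsqrt[OF unitA])
  have "norm (T x) \<le> sqrt N2 * norm x" for x
  proof (cases "T x = 0")
    case True then show ?thesis using N2 by simp
  next
    case False
    have "(norm (T x))\<^sup>2 = Re (cinner (T x) (T x))" by (rule norm_sq_cinner)
    also have "\<dots> = Re (cinner x (A (T x)))" by (simp add: adj)
    also have "\<dots> \<le> cmod (cinner x (A (T x)))" by (rule complex_Re_le_cmod)
    also have "\<dots> \<le> norm x * norm (A (T x))" by (rule cauchy_schwarz)
    also have "\<dots> \<le> norm x * (sqrt N2 * norm (T x))" by (intro mult_left_mono Ab) simp
    finally have "norm (T x) * norm (T x) \<le> (sqrt N2 * norm x) * norm (T x)"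
      by (simp add: power2_eq_square algebra_simps)
    then show ?thesis using False by simp
  qed
  then have "onorm T \<le> sqrt N2" by (intro onorm_bound) (simp_all add: N2)
  then have "(onorm T)\<^sup>2 \<le> (sqrt N2)\<^sup>2" by (intro power_mono) (simp_all add: onorm_pos_le blT)
  then have e2: "(onorm T)\<^sup>2 + alpha_op T \<le> Mx" using N2 by (simp add: N2_def)
  show ?thesis using e1 e2 by (simp add: Mx_def w_def A_def)
qed

end
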